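(* Consider Algorithm 3 (described in the context) under the Standing Assumption and Matrix Assumption of the context, and suppose $\{\beta_k\}$ is chosen such that $\beta_k\bar\xi_k\bar\tau_k/(\bar\tau_kL+\Gamma)\in(0,1]$ for all $k\in\mathbb{N}$. Then for all $k\in\mathbb{N}$, $$\phi(x_k+\bar\alpha_k\bar d_k,\bar\tau_k)-\phi(x_k,\bar\tau_k)\le-\bar\alpha_k\Delta q(x_k,\bar\tau_k,g_k,H_k,d_k)+\tfrac12\bar\alpha_k\beta_k\Delta q(x_k,\bar\tau_k,\bar g_k,H_k,\bar d_k)+\bar\alpha_k\bar\tau_kg_k^T(\bar d_k-d_k).$$
   Context: Problem: $\min_x f(x)$ s.t. $c(x)=0$, $f(x)=\mathbb{E}[F(x,\omega)]$, $c:\mathbb{R}^n\to\mathbb{R}^m$ deterministic. Notation: $g_k=\nabla f(x_k)$, $c_k=c(x_k)$, $J_k=\nabla c(x_k)^T$; $\phi(x,\tau)=\tau f(x)+\|c(x)\|_1$; $\Delta q(x,\tau,g,H,d)=-\tau(g^Td+\frac12\max\{d^THd,0\})+\|c(x)\|_1$. Standing Assumption: an open convex set $\mathcal X$ contains all iterates; $f$ is $C^1$, bounded below on $\mathcal X$, $\nabla f$ bounded and $L$-Lipschitz on $\mathcal X$; $c$, $\nabla c^T$ bounded on $\mathcal X$; $\nabla c_i$ is $\gamma_i$-Lipschitz on $\mathcal X$; singular values of $\nabla c(x)^T$ bounded away from zero uniformly over $\mathcal X$; $\Gamma:=\sum_i\gamma_i$. Matrix Assumption: deterministic symmetric $H_k$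 with $\|H_k\|_2\le\kappa_H$ and $u^TH_ku\ge\zeta\|u\|_2^2$ whenever $J_ku=0$. Algorithm 3 (inputs $x_0$, $\bar\tau_{-1}>0$, $\epsilon,\sigma\in(0,1)$, $\bar\xi_{-1}>0$, $\{\beta_k\}\subset(0,1]$, $\theta\ge0$): at iteration $k$, obtain stochastic gradient $\bar g_k$; $(\bar d_k,\bar y_k)$ solves $H_k\bar d_k+J_k^T\bar y_k=-\bar g_k$, $J_k\bar d_k=-c_k$ (assumed $\bar d_k\neq0$). $\bar\tau_k^{trial}=\infty$ if $\bar g_k^T\bar d_k+\max\{\bar d_k^TH_k\bar d_k,0\}\le0$, else $\frac{(1-\sigma)\|c_k\|_1}{\bar g_k^T\bar d_k+\max\{\bar d_k^TH_k\bar d_k,0\}}$; $\bar\tau_k=\bar\tau_{k-1}$ if $\bar\tau_{k-1}\le\bar\tau_k^{trial}$, else $(1-\epsilon)\bar\tau_k^{trial}$. $\bar\xi_k^{trial}=\frac{\Delta q(x_k,\bar\tau_k,\bar g_k,H_k,\bar d_k)}{\bar\tau_k\|\bar d_k\|_2^2}$; $\bar\xi_k=\bar\xi_{k-1}$ if $\bar\xi_{k-1}\le\bar\xi_k^{trial}$, else $(1-\epsilon)\bar\xi_k^{trial}$. With $D_k=(\bar\tau_kL+\Gamma)\|\bar d_k\|_2^2$, $\hat a_k=\beta_k\Delta q(x_k,\bar\tau_k,\bar g_k,H_k,\bar d_k)/D_k$, $\tilde a_k=\hat a_k-4\|c_k\|_1/D_k$, project both onto $[a_k,a_k+\theta\beta_k^2]$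 with $a_k=\frac{\beta_k\bar\xi_k\bar\tau_k}{\bar\tau_kL+\Gamma}$ to get $\widehat\alpha_k,\widetilde\alpha_k$; $\bar\alpha_k=\widehat\alpha_k$ if $\widehat\alpha_k<1$, $1$ if $\widetilde\alpha_k\le1\le\widehat\alpha_k$, $\widetilde\alpha_k$ if $\widetilde\alpha_k>1$; $x_{k+1}=x_k+\bar\alpha_k\bar d_k$. Deterministic counterpart: $(d_k,y_k)$ solves $H_kd_k+J_k^Ty_k=-g_k$, $J_kd_k=-c_k$. *)

theory Defs
  imports "HOL-Analysis.Analysis"
begin

definition norm1 :: "real^'m \<Rightarrow> real" where
  "norm1 v = (\<Sum>i\<in>UNIV. \<bar>v $ i\<bar>)"

definition merit :: "(real^'n \<Rightarrow> real) \<Rightarrow> (real^'n \<Rightarrow> real^'m) \<Rightarrow> real^'n \<Rightarrow> real \<Rightarrow> real" where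
  "merit f c x tau = tau * f x + norm1 (c x)"

definition Delta_q :: "(real^'n \<Rightarrow> real^'m) \<Rightarrow> real^'n \<Rightarrow> real \<Rightarrow> real^'n \<Rightarrow> real^'n^'n \<Rightarrow> real^'n \<Rightarrow> real" where
  "Delta_q c x tau g H d = - tau * (g \<bullet> d + 1/2 * max (d \<bullet> (H *v d)) 0) + norm1 (c x)"

definition proj_interval :: "real \<Rightarrow> real \<Rightarrow> real \<Rightarrow> real" where
  "proj_interval lo hi v = min hi (max lo v)"

end

theory Submission
  imports Defs
begin

lemma descent_gen:
  fixes F :: "real^'n \<Rightarrow> real" and G :: "real^'n \<Rightarrow> real^'n"
  assumes cX: "convex X" and xX: "x \<in> X" and yX: "x + h \<in> X"
    and dF: "\<forall>z\<in>X. (F has_derivative (\<lambda>v. G z \<bullet> v)) (at z)"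
    and lip: "\<forall>z\<in>X. norm (G z - G x) \<le> M * dist z x"
  shows "F (x + h) \<le> F x + G x \<bullet> h + M / 2 * (norm h)\<^sup>2"
proof -
  define \<psi> where "\<psi> t = F (x + t *\<^sub>R h) - t * (G x \<bullet> h) - M / 2 * t\<^sup>2 * (norm h)\<^sup>2" for t
  have "\<psi> 1 \<le> \<psi> 0"
  proof (rule DERIV_nonpos_imp_nonincreasing[of 0 1])
    fix t :: real assume t0: "0 \<le> t" and t1: "t \<le> 1"
    have zX: "x + t *\<^sub>R h \<in> X"
    proof -
      have "(1 - t) *\<^sub>R x + t *\<^sub>R (x + h) \<in> X"
        using convexD[OF cX xX yX, of "1 - t" t] t0 t1 by simp
      moreover have "(1 - t) *\<^sub>R x + t *\<^sub>R (x + h) = x + t *\<^sub>R h"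
        by (simp add: algebra_simps)
      ultimately show ?thesis by simp
    qed
    have d1: "((\<lambda>s. x + s *\<^sub>R h) has_derivative (\<lambda>s. s *\<^sub>R h)) (at t)"
      by (auto intro!: derivative_eq_intros)
    have d2: "((\<lambda>s. F (x + s *\<^sub>R h)) has_derivative (\<lambda>s. G (x + t *\<^sub>R h) \<bullet> (s *\<^sub>R h))) (at t)"
    proof -
      have "(F has_derivative (\<lambda>v. G (x + t *\<^sub>R h) \<bullet> v)) (at (x + t *\<^sub>R h))"
        using dF zX by blast
      from has_derivative_compose[OF d1 this] show ?thesis by (simp add: o_def)
    qed
    have d3: "((\<lambda>s. F (x + s *\<^sub>R h)) has_real_derivative (G (x + t *\<^sub>R h) \<bullet> h)) (at t)"
      unfolding has_field_derivative_def using d2 by (simp add: mult.commute[of _ "G (x + t *\<^sub>R h) \<bullet> h"])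
    have d4: "(\<psi> has_real_derivative (G (x + t *\<^sub>R h) \<bullet> h - G x \<bullet> h - M * t * (norm h)\<^sup>2)) (at t)"
      unfolding \<psi>_def
      by (rule derivative_eq_intros d3 refl | simp)+
    have "G (x + t *\<^sub>R h) \<bullet> h - G x \<bullet> h = (G (x + t *\<^sub>R h) - G x) \<bullet> h"
      by (simp add: inner_diff_left)
    also have "\<dots> \<le> norm (G (x + t *\<^sub>R h) - G x) * norm h"
      by (rule Cauchy_Schwarz_ineq2[THEN order_trans[OF abs_ge_self]])
    also have "\<dots> \<le> (M * dist (x + t *\<^sub>R h) x) * norm h"
      using lip zX by (intro mult_right_mono) auto
    also have "dist (x + t *\<^sub>R h) x = t * norm h"
      using t0 by (simp add: dist_norm)
    finally have "G (x + t *\<^sub>R h) \<bullet> h - G x \<bullet> h - M * t * (norm h)\<^sup>2 \<le> 0"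
      by (simp add: power2_eq_square algebra_simps)
    with d4 show "\<exists>y. (\<psi> has_real_derivative y) (at t) \<and> y \<le> 0" by blast
  qed simp
  then show ?thesis unfolding \<psi>_def by simp
qed

lemma key_step:
  fixes \<alpha> a ah atl hi N D bQ \<alpha>h \<alpha>t :: real
  assumes D: "D > 0" and N: "N \<ge> 0" and a0: "a > 0" and a1: "a \<le> 1" and aah: "a \<le> ah"
    and ah: "ah = bQ / D" and atl: "atl = ah - 4 * N / D" and hi: "hi \<ge> a"
    and \<alpha>h: "\<alpha>h = min hi (max a ah)" and \<alpha>t: "\<alpha>t = min hi (max a atl)"
    and \<alpha>: "\<alpha> = (if \<alpha>h < 1 then \<alpha>h else if \<alpha>t \<le> 1 then 1 else \<alpha>t)"
  shows "1/2 * \<alpha>\<^sup>2 * D + \<bar>1 - \<alpha>\<bar> * N - N + \<alpha> * N \<le> 1/2 * \<alpha> * bQ \<and> \<alpha> > 0"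
proof -
  have bQ: "bQ = ah * D" using ah D by simp
  show ?thesis
  proof (cases "\<alpha>h < 1")
    case True
    then have e: "\<alpha> = \<alpha>h" using \<alpha> by simp
    have le: "\<alpha> \<le> ah" "\<alpha> > 0" "\<alpha> < 1" using e \<alpha>h aah hi a0 True by auto
    have "1/2 * \<alpha>\<^sup>2 * D \<le> 1/2 * \<alpha> * (ah * D)"
      using le D by (simp add: power2_eq_square mult_left_mono mult_right_mono)
    then show ?thesis using le bQ by (simp add: algebra_simps)
  next
    case F: False
    show ?thesis
    proof (cases "\<alpha>t \<le> 1")
      case True
      then have e: "\<alpha> = 1" using \<alpha> F by simp
      have "ah \<ge> 1" using F \<alpha>h aah by auto
      then have "D \<le> ah * D" using D by simp
      then show ?thesis using e bQ by simp
    next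
      case False
      then have e: "\<alpha> = \<alpha>t" using \<alpha> F by simp
      have le: "\<alpha> \<le> atl" "\<alpha> > 1" using False e \<alpha>t a1 by auto
      have "\<alpha> * D \<le> atl * D" using le D by simp
      also have "atl * D = bQ - 4 * N" using atl ah D by (simp add: field_simps)
      finally have "\<alpha> * D \<le> bQ - 4 * N" .
      then have "1/2 * \<alpha> * (\<alpha> * D) \<le> 1/2 * \<alpha> * (bQ - 4 * N)"
        using le by (intro mult_left_mono) auto
      moreover have "\<bar>1 - \<alpha>\<bar> = \<alpha> - 1" using le by simp
      ultimately show ?thesis using le N by (simp add: power2_eq_square algebra_simps)
    qed
  qed
qed

lemma norm1_nonneg: "norm1 v \<ge> 0"
  unfolding norm1_def by (simp add: sum_nonneg)

lemma lip_nonneg: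
  fixes F :: "real^'n \<Rightarrow> 'b::real_normed_vector"
  assumes oX: "open X" and xX: "x \<in> X" and lip: "\<forall>z\<in>X. norm (F z - F x) \<le> M * dist z x"
  shows "M \<ge> 0"
proof -
  obtain e where e: "e > 0" "ball x e \<subseteq> X" using oX xX open_contains_ball by blast
  define z where "z = x + (e/2) *\<^sub>R axis (undefined::'n) (1::real)"
  have dz: "dist z x = e/2" using e by (simp add: z_def dist_norm)
  then have "z \<in> X" using e by (auto simp: dist_commute)
  then have "0 \<le> M * (e/2)" using lip dz by (metis norm_ge_zero order_trans)
  then show ?thesis using e by (simp add: zero_le_mult_iff)
qed

lemma comp_bound:
  fixes c :: "real^'n \<Rightarrow> real^'m" and Jc :: "real^'n \<Rightarrow> real^'n^'m"
  assumes cX: "convex X" and xX: "x \<in> X" and yX: "x + h \<in> X"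
    and dc: "\<forall>z\<in>X. (c has_derivative (\<lambda>v. Jc z *v v)) (at z)"
    and lip: "\<forall>z\<in>X. norm (Jc z $ i - Jc x $ i) \<le> g * dist z x"
  shows "\<bar>c (x + h) $ i - c x $ i - (Jc x *v h) $ i\<bar> \<le> g / 2 * (norm h)\<^sup>2"
proof -
  have dci: "\<forall>z\<in>X. ((\<lambda>w. c w $ i) has_derivative (\<lambda>v. Jc z $ i \<bullet> v)) (at z)"
  proof
    fix z assume "z \<in> X"
    then have d: "(c has_derivative (\<lambda>v. Jc z *v v)) (at z)" using dc by blast
    have l: "((\<lambda>v. v $ i) has_derivative (\<lambda>v. v $ i)) (at (c z))"
      by (rule bounded_linear_imp_has_derivative) (rule bounded_linear_vec_nth)
    from has_derivative_compose[OF d l] show "((\<lambda>w. c w $ i) has_derivative (\<lambda>v. Jc z $ i \<bullet> v)) (at z)"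
      by (simp add: matrix_vector_mul_component)
  qed
  have dci2: "\<forall>z\<in>X. ((\<lambda>w. - (c w $ i)) has_derivative (\<lambda>v. (- (Jc z $ i)) \<bullet> v)) (at z)"
  proof
    fix z assume "z \<in> X"
    with dci have "((\<lambda>w. c w $ i) has_derivative (\<lambda>v. Jc z $ i \<bullet> v)) (at z)" by blast
    from has_derivative_minus[OF this] show "((\<lambda>w. - (c w $ i)) has_derivative (\<lambda>v. (- (Jc z $ i)) \<bullet> v)) (at z)"
      by simp
  qed
  have lip2: "\<forall>z\<in>X. norm ((- (Jc z $ i)) - (- (Jc x $ i))) \<le> g * dist z x"
    using lip by (simp add: norm_minus_commute)
  have u: "c (x + h) $ i \<le> c x $ i + Jc x $ i \<bullet> h + g / 2 * (norm h)\<^sup>2"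
    using descent_gen[OF cX xX yX dci lip] by simp
  have v: "- c (x + h) $ i \<le> - c x $ i + (- Jc x $ i) \<bullet> h + g / 2 * (norm h)\<^sup>2"
    using descent_gen[OF cX xX yX dci2 lip2] by simp
  show ?thesis using u v unfolding matrix_vector_mul_component inner_minus_left by (simp only: abs_le_iff) linarith
qed

theorem lemma3p6:
  fixes f :: "real^'n \<Rightarrow> real" and gf :: "real^'n \<Rightarrow> real^'n"
    and c :: "real^'n \<Rightarrow> real^'m" and Jc :: "real^'n \<Rightarrow> real^'n^'m"
    and X :: "(real^'n) set"
    and L :: real and \<gamma> :: "'m \<Rightarrow> real"
    and H :: "nat \<Rightarrow> real^'n^'n" and \<kappa>H \<zeta> :: real
    and xs :: "nat \<Rightarrow> real^'n"
    and gbar dbar d :: "nat \<Rightarrow> real^'n" and ybar y :: "nat \<Rightarrow> real^'m"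
    and taubar xibar alphabar beta :: "nat \<Rightarrow> real"
    and tau_init xi_init \<epsilon> \<sigma> \<theta> :: real
  assumes
    \<comment> \<open>Standing Assumption\<close>
    X_open: "open X" and X_convex: "convex X" and iterates_in_X: "\<forall>k. xs k \<in> X"
    and f_deriv: "\<forall>x\<in>X. (f has_derivative (\<lambda>h. gf x \<bullet> h)) (at x)"
    and gf_cont: "continuous_on X gf"
    and f_bdd_below: "\<exists>fl. \<forall>x\<in>X. fl \<le> f x"
    and gf_bdd: "\<exists>B. \<forall>x\<in>X. norm (gf x) \<le> B"
    and gf_lip: "\<forall>x\<in>X. \<forall>z\<in>X. norm (gf x - gf z) \<le> L * dist x z"
    and c_deriv: "\<forall>x\<in>X. (c has_derivative (\<lambda>h. Jc x *v h)) (at x)"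
    and c_bdd: "\<exists>B. \<forall>x\<in>X. norm (c x) \<le> B"
    and Jc_bdd: "\<exists>B. \<forall>x\<in>X. norm (Jc x) \<le> B"
    and Jc_row_lip: "\<forall>i. \<forall>x\<in>X. \<forall>z\<in>X. norm (Jc x $ i - Jc z $ i) \<le> \<gamma> i * dist x z"
    and Jc_sv: "\<exists>s>0. \<forall>x\<in>X. \<forall>v. s * norm v \<le> norm (transpose (Jc x) *v v)"
    \<comment> \<open>Matrix Assumption\<close>
    and H_sym: "\<forall>k. transpose (H k) = H k"
    and H_bdd: "\<forall>k. \<forall>u. norm (H k *v u) \<le> \<kappa>H * norm u"
    and \<zeta>_pos: "\<zeta> > 0"
    and H_curv: "\<forall>k. \<forall>u. Jc (xs k) *v u = 0 \<longrightarrow> \<zeta> * (norm u)\<^sup>2 \<le> u \<bullet> (H k *v u)"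
    \<comment> \<open>Algorithm 3 inputs\<close>
    and tau_init_pos: "tau_init > 0" and xi_init_pos: "xi_init > 0"
    and \<epsilon>_range: "0 < \<epsilon> \<and> \<epsilon> < 1" and \<sigma>_range: "0 < \<sigma> \<and> \<sigma> < 1"
    and beta_range: "\<forall>k. 0 < beta k \<and> beta k \<le> 1"
    and \<theta>_nonneg: "\<theta> \<ge> 0"
    \<comment> \<open>stochastic search direction and its deterministic counterpart\<close>
    and dbar_sys: "\<forall>k. H k *v dbar k + transpose (Jc (xs k)) *v ybar k = - gbar k
                       \<and> Jc (xs k) *v dbar k = - c (xs k)"
    and dbar_nz: "\<forall>k. dbar k \<noteq> 0"
    and d_sys: "\<forall>k. H k *v d k + transpose (Jc (xs k)) *v y k = - gf (xs k)
                       \<and> Jc (xs k) *v d k = - c (xs k)"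
    \<comment> \<open>merit parameter update\<close>
    and tau_upd: "\<forall>k. let tprev = (if k = 0 then tau_init else taubar (k - 1));
                         den = gbar k \<bullet> dbar k + max (dbar k \<bullet> (H k *v dbar k)) 0;
                         trial = (1 - \<sigma>) * norm1 (c (xs k)) / den
                     in taubar k = (if den \<le> 0 \<or> tprev \<le> trial then tprev else (1 - \<epsilon>) * trial)"
    \<comment> \<open>ratio parameter update\<close>
    and xi_upd: "\<forall>k. let xprev = (if k = 0 then xi_init else xibar (k - 1));
                        trial = Delta_q c (xs k) (taubar k) (gbar k) (H k) (dbar k)
                                / (taubar k * (norm (dbar k))\<^sup>2)
                    in xibar k = (if xprev \<le> trial then xprev else (1 - \<epsilon>) * trial)"
    \<comment> \<open>step size selection\<close>
    and alpha_sel: "\<forall>k. let D = (taubar k * L + sum \<gamma> UNIV) * (norm (dbar k))\<^sup>2;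
                           a_hat = beta k * Delta_q c (xs k) (taubar k) (gbar k) (H k) (dbar k) / D;
                           a_til = a_hat - 4 * norm1 (c (xs k)) / D;
                           a = beta k * xibar k * taubar k / (taubar k * L + sum \<gamma> UNIV);
                           \<alpha>h = proj_interval a (a + \<theta> * (beta k)\<^sup>2) a_hat;
                           \<alpha>t = proj_interval a (a + \<theta> * (beta k)\<^sup>2) a_til
                       in alphabar k = (if \<alpha>h < 1 then \<alpha>h else if \<alpha>t \<le> 1 then 1 else \<alpha>t)"
    and x_upd: "\<forall>k. xs (Suc k) = xs k + alphabar k *\<^sub>R dbar k"
    \<comment> \<open>hypothesis of the lemma on the choice of beta\<close>
    and beta_choice: "\<forall>k. 0 < beta k * xibar k * taubar k / (taubar k * L + sum \<gamma> UNIV)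
                          \<and> beta k * xibar k * taubar k / (taubar k * L + sum \<gamma> UNIV) \<le> 1"
  shows "\<forall>k. merit f c (xs k + alphabar k *\<^sub>R dbar k) (taubar k) - merit f c (xs k) (taubar k)
             \<le> - alphabar k * Delta_q c (xs k) (taubar k) (gf (xs k)) (H k) (d k)
               + 1/2 * alphabar k * beta k * Delta_q c (xs k) (taubar k) (gbar k) (H k) (dbar k)
               + alphabar k * taubar k * (gf (xs k) \<bullet> (dbar k - d k))"
proof -
  have tau_step: "(if k = 0 then tau_init else taubar (k - 1)) \<ge> 0 \<Longrightarrow> taubar k \<ge> 0" for k
  proof -
    assume tp: "(if k = 0 then tau_init else taubar (k - 1)) \<ge> 0"
    define tprev where "tprev = (if k = 0 then tau_init else taubar (k - 1))"
    define den where "den = gbar k \<bullet> dbar k + max (dbar k \<bullet> (H k *v dbar k)) 0"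
    define trial where "trial = (1 - \<sigma>) * norm1 (c (xs k)) / den"
    have e: "taubar k = (if den \<le> 0 \<or> tprev \<le> trial then tprev else (1 - \<epsilon>) * trial)"
      using tau_upd[rule_format, of k] unfolding Let_def tprev_def den_def trial_def by simp
    show ?thesis
    proof (cases "den \<le> 0 \<or> tprev \<le> trial")
      case True then show ?thesis using e tp tprev_def by simp
    next
      case False
      then have "den > 0" by simp
      then have "trial \<ge> 0" unfolding trial_def using \<sigma>_range norm1_nonneg[of "c (xs k)"] by simp
      then show ?thesis using e False \<epsilon>_range by simp
    qed
  qed
  have tau_nn: "taubar k \<ge> 0" for k
  proof (induction k)
    case 0 then show ?case using tau_step[of 0] tau_init_pos by simp
  next
    case (Suc k) then show ?case using tau_step[of "Suc k"] by simp
  qed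
  have L0: "L \<ge> 0"
    using lip_nonneg[OF X_open iterates_in_X[rule_format, of 0], of gf L] gf_lip iterates_in_X by blast
  have g0: "\<gamma> i \<ge> 0" for i
    using lip_nonneg[OF X_open iterates_in_X[rule_format, of 0], of "\<lambda>z. Jc z $ i" "\<gamma> i"] Jc_row_lip iterates_in_X by blast
  have G0: "sum \<gamma> UNIV \<ge> 0" using g0 by (simp add: sum_nonneg)
  show ?thesis
  proof
    fix k
    let ?x = "xs k" and ?\<alpha> = "alphabar k" and ?db = "dbar k" and ?\<tau> = "taubar k" and ?\<beta> = "beta k"
    let ?y = "xs k + alphabar k *\<^sub>R dbar k" and ?S = "taubar k * L + sum \<gamma> UNIV"
    let ?N = "norm1 (c (xs k))" and ?nd = "(norm (dbar k))\<^sup>2"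
    let ?Qb = "Delta_q c (xs k) (taubar k) (gbar k) (H k) (dbar k)"
    have xX: "?x \<in> X" using iterates_in_X by blast
    have yX: "?y \<in> X" using iterates_in_X x_upd by metis
    have nh: "(norm (?\<alpha> *\<^sub>R ?db))\<^sup>2 = ?\<alpha>\<^sup>2 * ?nd"
      by (simp add: power_mult_distrib)
    have fb: "f ?y \<le> f ?x + ?\<alpha> * (gf ?x \<bullet> ?db) + L / 2 * (?\<alpha>\<^sup>2 * ?nd)"
    proof -
      have "\<forall>z\<in>X. norm (gf z - gf ?x) \<le> L * dist z ?x" using gf_lip xX by blast
      from descent_gen[OF X_convex xX yX f_deriv this] show ?thesis using nh by simp
    qed
    have cb: "\<bar>c ?y $ i\<bar> \<le> \<bar>1 - ?\<alpha>\<bar> * \<bar>c ?x $ i\<bar> + \<gamma> i / 2 * (?\<alpha>\<^sup>2 * ?nd)" for i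
    proof -
      have "\<forall>z\<in>X. norm (Jc z $ i - Jc ?x $ i) \<le> \<gamma> i * dist z ?x" using Jc_row_lip xX by blast
      from comp_bound[OF X_convex xX yX c_deriv this]
      have b: "\<bar>c ?y $ i - c ?x $ i - (Jc ?x *v (?\<alpha> *\<^sub>R ?db)) $ i\<bar> \<le> \<gamma> i / 2 * (?\<alpha>\<^sup>2 * ?nd)"
        using nh by simp
      have "(Jc ?x *v (?\<alpha> *\<^sub>R ?db)) $ i = ?\<alpha> * (Jc ?x *v ?db) $ i"
        by (simp add: matrix_vector_mul_component)
      also have "\<dots> = - ?\<alpha> * c ?x $ i" using dbar_sys by simp
      finally have "c ?y $ i - c ?x $ i - (Jc ?x *v (?\<alpha> *\<^sub>R ?db)) $ i = c ?y $ i - (1 - ?\<alpha>) * c ?x $ i"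
        by (simp add: algebra_simps)
      with b have "\<bar>c ?y $ i - (1 - ?\<alpha>) * c ?x $ i\<bar> \<le> \<gamma> i / 2 * (?\<alpha>\<^sup>2 * ?nd)" by simp
      then have "\<bar>c ?y $ i\<bar> \<le> \<bar>(1 - ?\<alpha>) * c ?x $ i\<bar> + \<gamma> i / 2 * (?\<alpha>\<^sup>2 * ?nd)"
        by linarith
      then show ?thesis by (simp add: abs_mult)
    qed
    have nb: "norm1 (c ?y) \<le> \<bar>1 - ?\<alpha>\<bar> * ?N + sum \<gamma> UNIV / 2 * (?\<alpha>\<^sup>2 * ?nd)"
    proof -
      have "norm1 (c ?y) \<le> (\<Sum>i\<in>UNIV. \<bar>1 - ?\<alpha>\<bar> * \<bar>c ?x $ i\<bar> + \<gamma> i / 2 * (?\<alpha>\<^sup>2 * ?nd))"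
        unfolding norm1_def by (rule sum_mono) (rule cb)
      also have "\<dots> = \<bar>1 - ?\<alpha>\<bar> * ?N + sum \<gamma> UNIV / 2 * (?\<alpha>\<^sup>2 * ?nd)"
        by (simp add: norm1_def sum.distrib sum_distrib_left sum_distrib_right sum_divide_distrib)
      finally show ?thesis .
    qed
    have a_def: "beta k * xibar k * taubar k / ?S > 0" "beta k * xibar k * taubar k / ?S \<le> 1"
      using beta_choice by auto
    have b0: "?\<beta> > 0" using beta_range by auto
    have t0: "?\<tau> > 0" using tau_nn[of k] a_def(1) by (cases "?\<tau> = 0") auto
    have S0: "?S > 0"
    proof -
      have "?S \<ge> 0" using t0 L0 G0 by simp
      moreover have "?S \<noteq> 0" using a_def(1) by (cases "?S = 0") auto
      ultimately show ?thesis by simp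
    qed
    have xi0: "xibar k > 0"
    proof -
      have "beta k * xibar k * taubar k > 0" using a_def(1) S0 by (simp add: zero_less_divide_iff)
      then show ?thesis using b0 t0 by (simp add: zero_less_mult_iff)
    qed
    have nd0: "?nd > 0" using dbar_nz by simp
    have D0: "?S * ?nd > 0" using S0 nd0 by simp
    have xi_le: "xibar k \<le> ?Qb / (?\<tau> * ?nd)"
    proof -
      define xprev where "xprev = (if k = 0 then xi_init else xibar (k - 1))"
      define trial where "trial = ?Qb / (?\<tau> * ?nd)"
      have e: "xibar k = (if xprev \<le> trial then xprev else (1 - \<epsilon>) * trial)"
        using xi_upd[rule_format, of k] unfolding Let_def xprev_def trial_def by simp
      show ?thesis
      proof (cases "xprev \<le> trial")
        case True then show ?thesis using e trial_def by simp
      next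
        case False
        then have e2: "xibar k = (1 - \<epsilon>) * trial" using e by simp
        then have "trial > 0" using xi0 \<epsilon>_range by (simp add: zero_less_mult_iff)
        then have "(1 - \<epsilon>) * trial \<le> trial" using \<epsilon>_range by (simp add: mult_le_cancel_right1)
        then show ?thesis using e2 trial_def by simp
      qed
    qed
    have Qb_ge: "xibar k * ?\<tau> * ?nd \<le> ?Qb"
      using xi_le t0 nd0 by (simp add: field_simps)
    have a_le: "beta k * xibar k * taubar k / ?S \<le> ?\<beta> * ?Qb / (?S * ?nd)"
    proof -
      have "beta k * xibar k * taubar k / ?S = (beta k * xibar k * taubar k * ?nd) / (?S * ?nd)"
        using nd0 by simp
      also have "\<dots> = ?\<beta> * (xibar k * ?\<tau> * ?nd) / (?S * ?nd)"
        by (simp add: ac_simps)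
      also have "\<dots> \<le> ?\<beta> * ?Qb / (?S * ?nd)"
        using Qb_ge b0 D0 by (intro divide_right_mono mult_left_mono) auto
      finally show ?thesis .
    qed
    have hi: "beta k * xibar k * taubar k / ?S \<le> beta k * xibar k * taubar k / ?S + \<theta> * ?\<beta>\<^sup>2"
      using \<theta>_nonneg by simp
    have ks: "1/2 * ?\<alpha>\<^sup>2 * (?S * ?nd) + \<bar>1 - ?\<alpha>\<bar> * ?N - ?N + ?\<alpha> * ?N \<le> 1/2 * ?\<alpha> * (?\<beta> * ?Qb) \<and> ?\<alpha> > 0"
      apply (rule key_step[OF D0 norm1_nonneg a_def(1) a_def(2) a_le refl refl hi refl refl])
      using alpha_sel[rule_format, of k] unfolding Let_def proj_interval_def by simp
    show "merit f c ?y ?\<tau> - merit f c ?x ?\<tau>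
             \<le> - ?\<alpha> * Delta_q c ?x ?\<tau> (gf ?x) (H k) (d k)
               + 1/2 * ?\<alpha> * ?\<beta> * ?Qb + ?\<alpha> * ?\<tau> * (gf ?x \<bullet> (?db - d k))"
    proof -
      let ?M = "max (d k \<bullet> (H k *v d k)) 0"
      have M0: "?\<alpha> * ?\<tau> * ?M \<ge> 0" using ks t0 by simp
      have tf: "?\<tau> * f ?y \<le> ?\<tau> * (f ?x + ?\<alpha> * (gf ?x \<bullet> ?db) + L / 2 * (?\<alpha>\<^sup>2 * ?nd))"
        using fb t0 by (simp add: mult_left_mono)
      show ?thesis using tf nb ks M0
        unfolding merit_def Delta_q_def inner_diff_right
        by (simp add: algebra_simps) linarith?
    qed
  qed
qed

end
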